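(* Let $U\subset \mathbb R^n$ and $V\subset \mathbb R^m$ be open and let $f:U\times V\to \mathbb R$ be upper-semicontinuous and bounded. For $\epsilon>0$ define $f^{\epsilon,p}(x,y)= \sup_{z\in U} \{ f(z,y) - \frac{1}{2\epsilon} \| z-x\|^2\}$ for $(x,y)\in U\times V$. Then: (i) if for each fixed $x$ the function $y\mapsto f(x,y)$ is convex, then $(x,y)\mapsto f^{\epsilon,p}(x,y) + \frac{1}{2\epsilon} \|x\|^2$ is convex; (ii) for $0<\epsilon'\le \epsilon$, $f \le f^{\epsilon',p} \le f^{\epsilon,p}$; (iii) with $\delta =2 (\epsilon \|f\|_{\infty})^{1/2}$, $f^{\epsilon,p}(x,y) = \sup_{\|\tau\|<\delta} \{ f(x+\tau,y) - \frac{1}{2\epsilon} \|\tau\|^2\}$ for $(x,y)\in U(\delta)\times V$; (iv) $\lim_{\epsilon\to 0^+} f^{\epsilon,p}(x,y) = f(x,y)$ for all $(x,y)\in U\times V$; (v) if $F$ is a constant-coefficient primitive subequation on $U$ with the Negativity Property and $f$ is $F\#\mathcal P$-subharmonic, then $f^{\epsilon,p}$ is $F\#\mathcal P$-subharmonic on $U(\delta)\times V$, with $\delta$ as in (iii).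
   Context: $U(\delta)=\{x\in\mathbb R^n: B_\delta(x)\subset U\}$ and $\|f\|_\infty=\sup|f|$. $J^2(U)=U\times\mathbb R\times\mathbb R^n\times\operatorname{Sym}^2_n$ ($\operatorname{Sym}^2_n$ = real symmetric $n\times n$ matrices), $J^2_n=\mathbb R\times\mathbb R^n\times\operatorname{Sym}^2_n$, and $F_x=\{(r,p,A):(x,r,p,A)\in F\}$. $F\subset J^2(U)$ is a primitive subequation if it is closed and $(r,p,A)\in F_x$, $P$ positive semidefinite imply $(r,p,A+P)\in F_x$; it is constant-coefficient if $F_x$ is independent of $x$; it has the Negativity Property if $(r,p,A)\in F_x$ and $r'\le r$ imply $(r',p,A)\in F_x$. For an upper-semicontinuous $h$ into $\mathbb R\cup\{-\infty\}$ on an open set $W\subset\mathbb R^k$ and $G\subset J^2(W)$: $(p,A)$ is an upper contact jet of $h$ at $w$ (with $h(w)\ne-\infty$) if $h(v)\le h(w)+p\cdot(v-w)+\frac12(v-w)^tA(v-w)$ for $v$ near $w$, and $h$ is $G$-subharmonic if $(h(w),p,A)\in G_w$ for all such jets. $\mathcal P\subset J^2(V)$ is $\{(y,r,p,D): D \text{ positive semidefinite}\}$. For $\Gamma\in\operatorname{Hom}(\mathbb R^n,\mathbb R^m)$ and $\alpha=(r,(p_1,p_2),\begin{pmatrix}B&C\\C^t&D\end{pmatrix})\in J^2_{n+m}$ set $i_\Gamma^*\alpha=(r,p_1+\Gamma^tp_2,B+C\Gamma+\Gamma^tC^t+\Gamma^tD\Gamma)$ and $j^*\alpha=(r,p_2,D)$;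 then $(F\#\mathcal P)_{(x,y)}=\{\alpha: i_\Gamma^*\alpha\in F_x\ \forall\Gamma,\ j^*\alpha\in\mathcal P_y\}$. *)

theory Defs
  imports "HOL-Analysis.Analysis"
begin

definition usc_on :: "'a::topological_space set \<Rightarrow> ('a \<Rightarrow> real) \<Rightarrow> bool" where
  "usc_on W h \<longleftrightarrow> (\<forall>w\<in>W. \<forall>a. h w < a \<longrightarrow> eventually (\<lambda>v. h v < a) (at w within W))"

text \<open>Convexity of a function on a (possibly non-convex) set: convex along every
  segment contained in the set.  For convex sets this is ordinary convexity.\<close>
definition convex_fun_on :: "'a::real_vector set \<Rightarrow> ('a \<Rightarrow> real) \<Rightarrow> bool" where
  "convex_fun_on S g \<longleftrightarrow> (\<forall>a\<in>S. \<forall>b\<in>S. closed_segment a b \<subseteq> S \<longrightarrow>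
      (\<forall>t\<in>{0..1}. g ((1 - t) *\<^sub>R a + t *\<^sub>R b) \<le> (1 - t) * g a + t * g b))"

definition sym_mat :: "real^'n^'n \<Rightarrow> bool" where
  "sym_mat A \<longleftrightarrow> transpose A = A"

definition psd :: "real^'n^'n \<Rightarrow> bool" where
  "psd A \<longleftrightarrow> sym_mat A \<and> (\<forall>v. 0 \<le> v \<bullet> (A *v v))"

text \<open>A constant-coefficient primitive subequation F on U, given by its common fibre
  F0 = F_x (a subset of J^2_n = R x R^n x Sym^2_n); F = U x F0.\<close>
definition cc_primitive_subequation :: "(real \<times> (real^'n) \<times> (real^'n^'n)) set \<Rightarrow> bool" where
  "cc_primitive_subequation F0 \<longleftrightarrow>
     closed F0 \<and> (\<forall>(r,p,A)\<in>F0. sym_mat A) \<and>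
     (\<forall>r p A P. (r,p,A) \<in> F0 \<longrightarrow> psd P \<longrightarrow> (r, p, A + P) \<in> F0)"

definition negativity_property :: "(real \<times> (real^'n) \<times> (real^'n^'n)) set \<Rightarrow> bool" where
  "negativity_property F0 \<longleftrightarrow> (\<forall>r p A r'. (r,p,A) \<in> F0 \<longrightarrow> r' \<le> r \<longrightarrow> (r', p, A) \<in> F0)"

text \<open>Upper contact jet at w = (x,y) in R^n x R^m.  The jet is
  ((p1,p2), [[B, C],[C^t, D]]) with B, D symmetric; the quadratic form of the block
  matrix on (a,b) is a.Ba + 2 a.Cb + b.Db.\<close>

definition upcj ::
  "(real^'n \<Rightarrow> real^'m \<Rightarrow> real) \<Rightarrow> real^'n \<Rightarrow> real^'m \<Rightarrow>
   real^'n \<Rightarrow> real^'m \<Rightarrow> real^'n^'n \<Rightarrow> real^'m^'n \<Rightarrow> real^'m^'m \<Rightarrow> bool" where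
  "upcj h x y p1 p2 B C D \<longleftrightarrow> sym_mat B \<and> sym_mat D \<and>
     eventually (\<lambda>(x',y'). h x' y' \<le> h x y + p1 \<bullet> (x' - x) + p2 \<bullet> (y' - y)
        + (1/2) * ((x' - x) \<bullet> (B *v (x' - x)) + 2 * ((x' - x) \<bullet> (C *v (y' - y)))
                   + (y' - y) \<bullet> (D *v (y' - y)))) (nhds (x, y))"

text \<open>i_Gamma^* alpha for Gamma in Hom(R^n,R^m) (an m x n matrix).\<close>
definition i_pull ::
  "real^'n^'m \<Rightarrow> real \<Rightarrow> real^'n \<Rightarrow> real^'m \<Rightarrow> real^'n^'n \<Rightarrow> real^'m^'n \<Rightarrow> real^'m^'m
   \<Rightarrow> real \<times> (real^'n) \<times> (real^'n^'n)" where
  "i_pull \<Gamma> r p1 p2 B C D =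
     (r, p1 + transpose \<Gamma> *v p2, B + C ** \<Gamma> + transpose \<Gamma> ** transpose C + transpose \<Gamma> ** D ** \<Gamma>)"

definition FP_subharmonic ::
  "(real \<times> (real^'n) \<times> (real^'n^'n)) set \<Rightarrow> ((real^'n) \<times> (real^'m)) set \<Rightarrow>
   (real^'n \<Rightarrow> real^'m \<Rightarrow> real) \<Rightarrow> bool" where
  "FP_subharmonic F0 W h \<longleftrightarrow> usc_on W (\<lambda>(x,y). h x y) \<and>
     (\<forall>(x,y)\<in>W. \<forall>p1 p2 B C D. upcj h x y p1 p2 B C D \<longrightarrow>
        (\<forall>\<Gamma>. i_pull \<Gamma> (h x y) p1 p2 B C D \<in> F0) \<and> psd D)"

definition sup_conv :: "real \<Rightarrow> (real^'n) set \<Rightarrow> (real^'n \<Rightarrow> real^'m \<Rightarrow> real) \<Rightarrow> real^'n \<Rightarrow> real^'m \<Rightarrow> real" where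
  "sup_conv \<epsilon> U f x y = (SUP z\<in>U. f z y - (norm (z - x))^2 / (2 * \<epsilon>))"

definition sup_norm :: "(real^'n) set \<Rightarrow> (real^'m) set \<Rightarrow> (real^'n \<Rightarrow> real^'m \<Rightarrow> real) \<Rightarrow> real" where
  "sup_norm U V f = (SUP (x,y)\<in>U \<times> V. \<bar>f x y\<bar>)"

definition shrink :: "'a::metric_space set \<Rightarrow> real \<Rightarrow> 'a set" where
  "shrink U \<delta> = {x. ball x \<delta> \<subseteq> U}"

end

theory Submission
  imports Defs "HOL-Analysis.Analysis"
begin

lemma sc_bdd:
  fixes f :: "real^'n \<Rightarrow> real^'m \<Rightarrow> real"
  assumes e: "\<epsilon> > 0" and hM: "\<forall>x\<in>U. \<forall>y\<in>V. \<bar>f x y\<bar> \<le> M" and y: "y \<in> V"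
  shows "bdd_above ((\<lambda>z. f z y - (norm (z - x))^2 / (2 * \<epsilon>)) ` U)"
proof (rule bdd_aboveI2)
  fix z assume "z \<in> U"
  then have "f z y \<le> M" using hM y by force
  moreover have "0 \<le> (norm (z - x))^2 / (2 * \<epsilon>)" using e by simp
  ultimately show "f z y - (norm (z - x))^2 / (2 * \<epsilon>) \<le> M" by linarith
qed

lemma sc_ge:
  fixes f :: "real^'n \<Rightarrow> real^'m \<Rightarrow> real"
  assumes e: "\<epsilon> > 0" and hM: "\<forall>x\<in>U. \<forall>y\<in>V. \<bar>f x y\<bar> \<le> M" and y: "y \<in> V" and z: "z \<in> U"
  shows "f z y - (norm (z - x))^2 / (2 * \<epsilon>) \<le> sup_conv \<epsilon> U f x y"
  unfolding sup_conv_def using sc_bdd[OF e hM y] z by (rule cSUP_upper[rotated])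

lemma sc_le:
  fixes f :: "real^'n \<Rightarrow> real^'m \<Rightarrow> real"
  assumes "U \<noteq> {}" and "\<And>z. z \<in> U \<Longrightarrow> f z y - (norm (z - x))^2 / (2 * \<epsilon>) \<le> b"
  shows "sup_conv \<epsilon> U f x y \<le> b"
  unfolding sup_conv_def using assms by (rule cSUP_least)

lemma sc_self:
  fixes f :: "real^'n \<Rightarrow> real^'m \<Rightarrow> real"
  assumes e: "\<epsilon> > 0" and hM: "\<forall>x\<in>U. \<forall>y\<in>V. \<bar>f x y\<bar> \<le> M" and y: "y \<in> V" and x: "x \<in> U"
  shows "f x y \<le> sup_conv \<epsilon> U f x y"
  using sc_ge[OF e hM y x, of x] by simp

lemma sc_upper:
  fixes f :: "real^'n \<Rightarrow> real^'m \<Rightarrow> real"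
  assumes e: "\<epsilon> > 0" and hM: "\<forall>x\<in>U. \<forall>y\<in>V. \<bar>f x y\<bar> \<le> M" and y: "y \<in> V" and U: "U \<noteq> {}"
  shows "sup_conv \<epsilon> U f x y \<le> M"
proof (rule sc_le[OF U])
  fix z assume "z \<in> U"
  then have "f z y \<le> M" using hM y by force
  moreover have "0 \<le> (norm (z - x))^2 / (2 * \<epsilon>)" using e by simp
  ultimately show "f z y - (norm (z - x))^2 / (2 * \<epsilon>) \<le> M" by linarith
qed

lemma part2:
  fixes f :: "real^'n \<Rightarrow> real^'m \<Rightarrow> real"
  assumes hM: "\<forall>x\<in>U. \<forall>y\<in>V. \<bar>f x y\<bar> \<le> M"
    and e: "0 < \<epsilon>'" "\<epsilon>' \<le> \<epsilon>" and x: "x \<in> U" and y: "y \<in> V"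
  shows "f x y \<le> sup_conv \<epsilon>' U f x y \<and> sup_conv \<epsilon>' U f x y \<le> sup_conv \<epsilon> U f x y"
proof
  show "f x y \<le> sup_conv \<epsilon>' U f x y" using sc_self[OF e(1) hM y x] .
  show "sup_conv \<epsilon>' U f x y \<le> sup_conv \<epsilon> U f x y"
  proof (rule sc_le)
    show "U \<noteq> {}" using x by auto
    fix z assume z: "z \<in> U"
    have "(norm (z - x))^2 / (2 * \<epsilon>) \<le> (norm (z - x))^2 / (2 * \<epsilon>')"
      using e by (intro divide_left_mono) auto
    then have "f z y - (norm (z - x))^2 / (2 * \<epsilon>') \<le> f z y - (norm (z - x))^2 / (2 * \<epsilon>)" by linarith
    also have "\<dots> \<le> sup_conv \<epsilon> U f x y" using sc_ge[of \<epsilon>, OF _ hM y z] e by simp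
    finally show "f z y - (norm (z - x))^2 / (2 * \<epsilon>') \<le> sup_conv \<epsilon> U f x y" .
  qed
qed

lemma part3:
  fixes f :: "real^'n \<Rightarrow> real^'m \<Rightarrow> real"
  assumes hM: "\<forall>x\<in>U. \<forall>y\<in>V. \<bar>f x y\<bar> \<le> M"
    and e: "0 < \<epsilon>" and d: "\<delta> = 2 * sqrt (\<epsilon> * M)" "0 < \<delta>"
    and x: "x \<in> shrink U \<delta>" and y: "y \<in> V"
  shows "sup_conv \<epsilon> U f x y = (SUP \<tau>\<in>ball 0 \<delta>. f (x + \<tau>) y - (norm \<tau>)^2 / (2 * \<epsilon>))"
proof -
  have bU: "ball x \<delta> \<subseteq> U" using x unfolding shrink_def by auto
  have xU: "x \<in> U" using bU d by auto
  have M0: "M > 0" using d e by (metis mult_pos_pos real_sqrt_gt_0_iff zero_less_mult_pos zero_less_mult_pos2 zero_less_numeral)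
  have d2: "\<delta>^2 = 4 * \<epsilon> * M" using d e M0 by (simp add: power_mult_distrib)
  have bdd: "bdd_above ((\<lambda>\<tau>. f (x + \<tau>) y - (norm \<tau>)^2 / (2 * \<epsilon>)) ` ball 0 \<delta>)"
  proof (rule bdd_aboveI2)
    fix \<tau> :: "real^'n" assume "\<tau> \<in> ball 0 \<delta>"
    then have "x + \<tau> \<in> U" using bU by (auto simp: dist_norm)
    then have "f (x + \<tau>) y \<le> M" using hM y by force
    moreover have "0 \<le> (norm \<tau>)^2 / (2 * \<epsilon>)" using e by simp
    ultimately show "f (x + \<tau>) y - (norm \<tau>)^2 / (2 * \<epsilon>) \<le> M" by linarith
  qed
  have zero: "f x y \<le> (SUP \<tau>\<in>ball 0 \<delta>. f (x + \<tau>) y - (norm \<tau>)^2 / (2 * \<epsilon>))"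
    using cSUP_upper[OF _ bdd, of 0] d by simp
  show ?thesis
  proof (rule antisym)
    show "sup_conv \<epsilon> U f x y \<le> (SUP \<tau>\<in>ball 0 \<delta>. f (x + \<tau>) y - (norm \<tau>)^2 / (2 * \<epsilon>))"
    proof (rule sc_le)
      show "U \<noteq> {}" using xU by auto
      fix z assume z: "z \<in> U"
      show "f z y - (norm (z - x))^2 / (2 * \<epsilon>) \<le> (SUP \<tau>\<in>ball 0 \<delta>. f (x + \<tau>) y - (norm \<tau>)^2 / (2 * \<epsilon>))"
      proof (cases "norm (z - x) < \<delta>")
        case True
        then have "z - x \<in> ball 0 \<delta>" by (simp add: dist_norm norm_minus_commute)
        from cSUP_upper[OF this bdd] show ?thesis by simp
      next
        case False
        then have "\<delta> \<le> norm (z - x)" by simp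
        then have "\<delta>^2 \<le> (norm (z - x))^2" using d by (intro power_mono) auto
        then have "2 * M \<le> (norm (z - x))^2 / (2 * \<epsilon>)" using d2 e
          by (subst pos_le_divide_eq) (auto simp: algebra_simps)
        moreover have "f z y \<le> M" "-M \<le> f x y" using hM y z xU by force+
        ultimately show ?thesis using zero by linarith
      qed
    qed
    show "(SUP \<tau>\<in>ball 0 \<delta>. f (x + \<tau>) y - (norm \<tau>)^2 / (2 * \<epsilon>)) \<le> sup_conv \<epsilon> U f x y"
    proof (rule cSUP_least)
      show "ball (0::real^'n) \<delta> \<noteq> {}" using d by auto
      fix \<tau> :: "real^'n" assume "\<tau> \<in> ball 0 \<delta>"
      then have "x + \<tau> \<in> U" using bU by (auto simp: dist_norm)
      from sc_ge[OF e hM y this, of x] show "f (x + \<tau>) y - (norm \<tau>)^2 / (2 * \<epsilon>) \<le> sup_conv \<epsilon> U f x y"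
        by simp
    qed
  qed
qed

lemma quad_lin:
  fixes z a b :: "'a::real_inner"
  shows "(norm ((1 - t) *\<^sub>R a + t *\<^sub>R b))^2 - (norm (z - ((1 - t) *\<^sub>R a + t *\<^sub>R b)))^2
     = (1 - t) * ((norm a)^2 - (norm (z - a))^2) + t * ((norm b)^2 - (norm (z - b))^2)"
  by (simp add: power2_norm_eq_inner inner_diff_left inner_diff_right inner_add_left inner_add_right
      algebra_simps inner_commute)

lemma seg_snd:
  assumes "closed_segment a b \<subseteq> U \<times> V"
  shows "closed_segment (snd a) (snd b) \<subseteq> V"
proof
  fix w assume "w \<in> closed_segment (snd a) (snd b)"
  then obtain u where u: "0 \<le> u" "u \<le> 1" "w = (1 - u) *\<^sub>R snd a + u *\<^sub>R snd b"
    by (auto simp: in_segment)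
  then have "(1 - u) *\<^sub>R a + u *\<^sub>R b \<in> closed_segment a b" by (auto simp: in_segment)
  with assms have "(1 - u) *\<^sub>R a + u *\<^sub>R b \<in> U \<times> V" by blast
  then show "w \<in> V" using u by (auto simp: mem_Times_iff)
qed

lemma part1:
  fixes f :: "real^'n \<Rightarrow> real^'m \<Rightarrow> real"
  assumes hM: "\<forall>x\<in>U. \<forall>y\<in>V. \<bar>f x y\<bar> \<le> M" and e: "0 < \<epsilon>"
    and conv: "\<forall>x\<in>U. convex_fun_on V (\<lambda>y. f x y)"
  shows "convex_fun_on (U \<times> V) (\<lambda>(x,y). sup_conv \<epsilon> U f x y + (norm x)^2 / (2 * \<epsilon>))"
  unfolding convex_fun_on_def
proof (intro ballI impI)
  fix a b t assume a: "a \<in> U \<times> V" and b: "b \<in> U \<times> V" and seg: "closed_segment a b \<subseteq> U \<times> V"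
    and t: "t \<in> {0..1::real}"
  obtain a1 a2 where aa: "a = (a1, a2)" by (cases a)
  obtain b1 b2 where bb: "b = (b1, b2)" by (cases b)
  define c1 where "c1 = (1 - t) *\<^sub>R a1 + t *\<^sub>R b1"
  define c2 where "c2 = (1 - t) *\<^sub>R a2 + t *\<^sub>R b2"
  have cc: "(1 - t) *\<^sub>R a + t *\<^sub>R b = (c1, c2)" by (simp add: aa bb c1_def c2_def)
  have "(1 - t) *\<^sub>R a + t *\<^sub>R b \<in> closed_segment a b" using t by (auto simp: in_segment)
  then have cUV: "(c1, c2) \<in> U \<times> V" using seg cc by auto
  have a1: "a1 \<in> U" and a2: "a2 \<in> V" and b1: "b1 \<in> U" and b2: "b2 \<in> V" using a b aa bb by auto
  have seg2: "closed_segment a2 b2 \<subseteq> V" using seg_snd[OF seg] aa bb by simp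
  have t0: "0 \<le> t" "t \<le> 1" using t by auto
  let ?Ha = "sup_conv \<epsilon> U f a1 a2 + (norm a1)^2 / (2 * \<epsilon>)"
  let ?Hb = "sup_conv \<epsilon> U f b1 b2 + (norm b1)^2 / (2 * \<epsilon>)"
  have "sup_conv \<epsilon> U f c1 c2 \<le> (1 - t) * ?Ha + t * ?Hb - (norm c1)^2 / (2 * \<epsilon>)"
  proof (rule sc_le)
    show "U \<noteq> {}" using a1 by auto
    fix z assume z: "z \<in> U"
    have fc: "f z c2 \<le> (1 - t) * f z a2 + t * f z b2"
      using conv z a2 b2 seg2 t unfolding convex_fun_on_def c2_def by blast
    have ga: "f z a2 - (norm (z - a1))^2 / (2 * \<epsilon>) \<le> sup_conv \<epsilon> U f a1 a2" by (rule sc_ge[OF e hM a2 z])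
    have gb: "f z b2 - (norm (z - b1))^2 / (2 * \<epsilon>) \<le> sup_conv \<epsilon> U f b1 b2" by (rule sc_ge[OF e hM b2 z])
    have ql: "((norm c1)^2 - (norm (z - c1))^2) / (2 * \<epsilon>)
       = (1 - t) * (((norm a1)^2 - (norm (z - a1))^2) / (2 * \<epsilon>)) + t * (((norm b1)^2 - (norm (z - b1))^2) / (2 * \<epsilon>))"
      unfolding c1_def quad_lin using e by (simp add: field_simps)
    have "(1 - t) * (f z a2 - (norm (z - a1))^2 / (2 * \<epsilon>)) \<le> (1 - t) * sup_conv \<epsilon> U f a1 a2"
      using ga t0 by (intro mult_left_mono) auto
    moreover have "t * (f z b2 - (norm (z - b1))^2 / (2 * \<epsilon>)) \<le> t * sup_conv \<epsilon> U f b1 b2"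
      using gb t0 by (intro mult_left_mono) auto
    ultimately show "f z c2 - (norm (z - c1))^2 / (2 * \<epsilon>) \<le> (1 - t) * ?Ha + t * ?Hb - (norm c1)^2 / (2 * \<epsilon>)"
      using fc ql by (simp add: algebra_simps add_divide_distrib diff_divide_distrib)
  qed
  then show "(\<lambda>(x, y). sup_conv \<epsilon> U f x y + (norm x)\<^sup>2 / (2 * \<epsilon>)) ((1 - t) *\<^sub>R a + t *\<^sub>R b)
       \<le> (1 - t) * (\<lambda>(x, y). sup_conv \<epsilon> U f x y + (norm x)\<^sup>2 / (2 * \<epsilon>)) a +
          t * (\<lambda>(x, y). sup_conv \<epsilon> U f x y + (norm x)\<^sup>2 / (2 * \<epsilon>)) b"
    using cc aa bb by simp
qed

lemma usc_nhds:
  assumes "usc_on W h" "w \<in> W" "h w < a"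
  shows "eventually (\<lambda>v. v \<in> W \<longrightarrow> h v < a) (nhds w)"
proof -
  have "eventually (\<lambda>v. h v < a) (at w within W)" using assms unfolding usc_on_def by blast
  then have "eventually (\<lambda>v. v \<noteq> w \<longrightarrow> v \<in> W \<longrightarrow> h v < a) (nhds w)"
    by (simp add: eventually_at_filter)
  then show ?thesis by eventually_elim (use assms in auto)
qed

lemma ev_compose:
  assumes "eventually P (nhds l)" "(g \<longlongrightarrow> l) F"
  shows "eventually (\<lambda>x. P (g x)) F"
  using assms filterlim_iff by blast

lemma part4:
  fixes f :: "real^'n \<Rightarrow> real^'m \<Rightarrow> real"
  assumes hM: "\<forall>x\<in>U. \<forall>y\<in>V. \<bar>f x y\<bar> \<le> M"
    and usc: "usc_on (U \<times> V) (\<lambda>(x,y). f x y)" and x: "x \<in> U" and y: "y \<in> V"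
  shows "((\<lambda>\<epsilon>. sup_conv \<epsilon> U f x y) \<longlongrightarrow> f x y) (at_right 0)"
proof (rule order_tendstoI)
  fix a assume a: "a < f x y"
  show "\<forall>\<^sub>F \<epsilon> in at_right 0. a < sup_conv \<epsilon> U f x y"
    using eventually_at_right_less[of 0]
    by eventually_elim (use sc_self[OF _ hM y x] a in force)
next
  fix a assume a: "f x y < a"
  define a' where "a' = (f x y + a) / 2"
  have a1: "f x y < a'" "a' < a" using a by (auto simp: a'_def)
  have "eventually (\<lambda>v. v \<in> U \<times> V \<longrightarrow> (\<lambda>(x,y). f x y) v < a') (nhds (x, y))"
    using usc_nhds[OF usc _ ] x y a1 by auto
  moreover have "((\<lambda>z. (z, y)) \<longlongrightarrow> (x, y)) (nhds x)" by (intro tendsto_Pair filterlim_ident tendsto_const)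
  ultimately have "eventually (\<lambda>z. (z, y) \<in> U \<times> V \<longrightarrow> f z y < a') (nhds x)"
    using ev_compose by fastforce
  then obtain d where d: "d > 0" "\<And>z. dist z x < d \<Longrightarrow> (z, y) \<in> U \<times> V \<longrightarrow> f z y < a'"
    unfolding eventually_nhds_metric by blast
  define e0 where "e0 = d^2 / (2 * (\<bar>M - a'\<bar> + 1))"
  have ab: "0 < 2 * (\<bar>M - a'\<bar> + 1)" by (smt (verit) abs_ge_zero)
  have e0: "e0 > 0" unfolding e0_def using d(1) ab by (intro divide_pos_pos) auto
  show "\<forall>\<^sub>F \<epsilon> in at_right 0. sup_conv \<epsilon> U f x y < a"
    unfolding eventually_at_right[OF zero_less_one]
  proof (intro exI[of _ e0] conjI allI impI e0)
    fix \<epsilon> :: real assume e: "0 < \<epsilon>" "\<epsilon> < e0"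
    have "sup_conv \<epsilon> U f x y \<le> a'"
    proof (rule sc_le)
      show "U \<noteq> {}" using x by auto
      fix z assume z: "z \<in> U"
      show "f z y - (norm (z - x))^2 / (2 * \<epsilon>) \<le> a'"
      proof (cases "dist z x < d")
        case True
        then have "f z y < a'" using d z y by auto
        moreover have "0 \<le> (norm (z - x))^2 / (2 * \<epsilon>)" using e by simp
        ultimately show ?thesis by linarith
      next
        case False
        then have "d \<le> norm (z - x)" by (simp add: dist_norm)
        then have dd: "d^2 \<le> (norm (z - x))^2" using d by (intro power_mono) auto
        have "2 * \<epsilon> * (\<bar>M - a'\<bar> + 1) \<le> 2 * e0 * (\<bar>M - a'\<bar> + 1)"
          using e by (intro mult_right_mono) auto
        also have "\<dots> = d^2" unfolding e0_def using ab by (simp add: field_simps)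
        finally have "2 * \<epsilon> * (\<bar>M - a'\<bar> + 1) \<le> (norm (z - x))^2" using dd by linarith
        then have "\<bar>M - a'\<bar> + 1 \<le> (norm (z - x))^2 / (2 * \<epsilon>)"
          using e by (subst pos_le_divide_eq) (auto simp: algebra_simps)
        moreover have "f z y \<le> M" using hM z y by force
        ultimately show ?thesis by linarith
      qed
    qed
    then show "sup_conv \<epsilon> U f x y < a" using a1 by linarith
  qed
qed

lemma radius:
  fixes M \<epsilon> b :: real
  assumes M: "M > 0" and e: "\<epsilon> > 0" and b: "b > - M"
  shows "\<exists>r>0. r < 2 * sqrt (\<epsilon> * M) \<and> M - r^2 / (2 * \<epsilon>) < b"
proof -
  define c where "c = max (2 * \<epsilon> * (M - b)) 0"
  have "0 < \<epsilon> * (M + b)" using e b by simp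
  then have c1: "c < 4 * \<epsilon> * M" using M e b unfolding c_def by (auto simp: max_def algebra_simps)
  have c2: "c \<ge> 2 * \<epsilon> * (M - b)" "c \<ge> 0" unfolding c_def by auto
  define r where "r = sqrt ((c + 4 * \<epsilon> * M) / 2)"
  have em: "4 * \<epsilon> * M = 4 * (\<epsilon> * M)" "0 < \<epsilon> * M" using e M by auto
  have pos: "(c + 4 * \<epsilon> * M) / 2 > 0" using c2 em by (smt (verit) divide_pos_pos)
  have r2: "r^2 = (c + 4 * \<epsilon> * M) / 2" unfolding r_def using pos by simp
  have "r > 0" unfolding r_def using pos by simp
  moreover have "r < 2 * sqrt (\<epsilon> * M)"
  proof -
    have "r < sqrt (4 * \<epsilon> * M)" unfolding r_def using c1 by (intro real_sqrt_less_mono) (auto simp: algebra_simps)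
    also have "sqrt (4 * \<epsilon> * M) = 2 * sqrt (\<epsilon> * M)"
      by (simp add: real_sqrt_mult mult.assoc)
    finally show ?thesis .
  qed
  moreover have "M - r^2 / (2 * \<epsilon>) < b"
  proof -
    have "c < r^2" unfolding r2 using c1 by simp
    then have "2 * \<epsilon> * (M - b) < r^2" using c2(1) by simp
    then have "M - b < r^2 / (2 * \<epsilon>)" using e by (subst pos_less_divide_eq) (auto simp: algebra_simps)
    then show ?thesis by linarith
  qed
  ultimately show ?thesis by blast
qed

lemma loc:
  fixes f :: "real^'n \<Rightarrow> real^'m \<Rightarrow> real"
  assumes usc: "usc_on (U \<times> V) (\<lambda>(x,y). f x y)" and z: "z \<in> U" and y: "y \<in> V"
    and lt: "f z y - (norm (z - x))^2 / (2 * \<epsilon>) < b" and e: "\<epsilon> > 0"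
  shows "eventually (\<lambda>q. (snd q, snd (fst q)) \<in> U \<times> V \<longrightarrow>
      f (snd q) (snd (fst q)) - (norm (snd q - fst (fst q)))^2 / (2 * \<epsilon>) < b) (nhds ((x, y), z))"
proof -
  define c where "c = (norm (z - x))^2 / (2 * \<epsilon>)"
  have t1: "((\<lambda>q. snd q) \<longlongrightarrow> z) (nhds ((x,y),z))"
    using tendsto_snd[OF filterlim_ident[of "nhds ((x,y),z)"]] by simp
  have t2: "((\<lambda>q. snd (fst q)) \<longlongrightarrow> y) (nhds ((x,y),z))"
    using tendsto_snd[OF tendsto_fst[OF filterlim_ident[of "nhds ((x,y),z)"]]] by simp
  have t3: "((\<lambda>q. fst (fst q)) \<longlongrightarrow> x) (nhds ((x,y),z))"
    using tendsto_fst[OF tendsto_fst[OF filterlim_ident[of "nhds ((x,y),z)"]]] by simp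
  define \<eta> where "\<eta> = (b - (f z y - c)) / 2"
  have eta: "\<eta> > 0" using lt unfolding \<eta>_def c_def by simp
  have "eventually (\<lambda>w. w \<in> U \<times> V \<longrightarrow> (\<lambda>(x,y). f x y) w < f z y + \<eta>) (nhds (z, y))"
    using usc_nhds[OF usc] z y eta by auto
  moreover have "((\<lambda>q::((real^'n) \<times> (real^'m)) \<times> (real^'n). (snd q, snd (fst q))) \<longlongrightarrow> (z, y)) (nhds ((x, y), z))"
    by (intro tendsto_intros t1 t2 t3) 
  ultimately have ev1: "eventually (\<lambda>q::((real^'n) \<times> (real^'m)) \<times> (real^'n).
      (snd q, snd (fst q)) \<in> U \<times> V \<longrightarrow> f (snd q) (snd (fst q)) < f z y + \<eta>) (nhds ((x, y), z))"
    using ev_compose by fastforce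
  have "((\<lambda>q::((real^'n) \<times> (real^'m)) \<times> (real^'n). (norm (snd q - fst (fst q)))^2 / (2 * \<epsilon>)) \<longlongrightarrow> c) (nhds ((x, y), z))"
    unfolding c_def using e by (intro tendsto_intros t1 t2 t3) auto 
  then have ev2: "eventually (\<lambda>q::((real^'n) \<times> (real^'m)) \<times> (real^'n).
       c - \<eta> < (norm (snd q - fst (fst q)))^2 / (2 * \<epsilon>)) (nhds ((x, y), z))"
    using eta by (intro order_tendstoD) auto
  from ev1 ev2 show ?thesis
  proof eventually_elim
    case (elim q)
    show ?case
    proof
      assume "(snd q, snd (fst q)) \<in> U \<times> V"
      with elim have "f (snd q) (snd (fst q)) < f z y + \<eta>" by blast
      with elim(2) show "f (snd q) (snd (fst q)) - (norm (snd q - fst (fst q)))^2 / (2 * \<epsilon>) < b"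
        unfolding \<eta>_def by (simp add: field_simps)
    qed
  qed
qed

lemma far:
  fixes f :: "real^'n \<Rightarrow> real^'m \<Rightarrow> real"
  assumes hM: "\<forall>x\<in>U. \<forall>y\<in>V. \<bar>f x y\<bar> \<le> M" and e: "\<epsilon> > 0" and z: "z \<in> U" and y: "y \<in> V"
    and r: "0 \<le> r" "r \<le> norm (z - x)"
  shows "f z y - (norm (z - x))^2 / (2 * \<epsilon>) \<le> M - r^2 / (2 * \<epsilon>)"
proof -
  have "r^2 \<le> (norm (z - x))^2" using r by (intro power_mono) auto
  then have "r^2 / (2 * \<epsilon>) \<le> (norm (z - x))^2 / (2 * \<epsilon>)" using e by (intro divide_right_mono) auto
  moreover have "f z y \<le> M" using hM z y by force
  ultimately show ?thesis by linarith
qed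

lemma ev_slice:
  fixes f :: "real^'n \<Rightarrow> real^'m \<Rightarrow> real"
  assumes "eventually (\<lambda>q. (snd q, snd (fst q)) \<in> U \<times> V \<longrightarrow>
      f (snd q) (snd (fst q)) - (norm (snd q - fst (fst q)))^2 / (2 * \<epsilon>) < b) (nhds ((x, y), z))"
  shows "\<exists>d>0. \<forall>z'. dist z' z < d \<longrightarrow> (z', y) \<in> U \<times> V \<longrightarrow> f z' y - (norm (z' - x))^2 / (2 * \<epsilon>) < b"
proof -
  have "((\<lambda>z'. ((x, y), z')) \<longlongrightarrow> ((x, y), z)) (nhds z)"
    by (intro tendsto_Pair filterlim_ident tendsto_const)
  from ev_compose[OF assms this]
  have "eventually (\<lambda>z'. (z', y) \<in> U \<times> V \<longrightarrow> f z' y - (norm (z' - x))^2 / (2 * \<epsilon>) < b) (nhds z)"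
    by simp
  then show ?thesis unfolding eventually_nhds_metric by blast
qed

lemma attain:
  fixes f :: "real^'n \<Rightarrow> real^'m \<Rightarrow> real"
  assumes hM: "\<forall>x\<in>U. \<forall>y\<in>V. \<bar>f x y\<bar> \<le> M" and e: "\<epsilon> > 0" and M0: "M > 0"
    and usc: "usc_on (U \<times> V) (\<lambda>(x,y). f x y)"
    and bx: "ball x (2 * sqrt (\<epsilon> * M)) \<subseteq> U" and y: "y \<in> V"
  shows "\<exists>z\<in>U. sup_conv \<epsilon> U f x y = f z y - (norm (z - x))^2 / (2 * \<epsilon>)"
proof (rule ccontr)
  assume na: "\<not> ?thesis"
  define s where "s = sup_conv \<epsilon> U f x y"
  have d0: "2 * sqrt (\<epsilon> * M) > 0" using e M0 by simp
  have xU: "x \<in> U" using bx d0 by auto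
  have lt: "f z y - (norm (z - x))^2 / (2 * \<epsilon>) < s" if "z \<in> U" for z
    using sc_ge[OF e hM y that, of x] na that unfolding s_def by force
  have "f x y < s" using lt[OF xU] by simp
  moreover have "- M \<le> f x y" using hM xU y by force
  ultimately have sM: "s > - M" by linarith
  obtain r where r: "r > 0" "r < 2 * sqrt (\<epsilon> * M)" "M - r^2 / (2 * \<epsilon>) < s"
    using radius[OF M0 e sM] by blast
  define K where "K = cball x r"
  have KU: "K \<subseteq> U" using bx r unfolding K_def by (auto simp: subset_iff)
  have "\<forall>z\<in>K. \<exists>eb. fst eb > 0 \<and> snd eb < s \<and>
      (\<forall>z'. dist z' z < fst eb \<longrightarrow> (z', y) \<in> U \<times> V \<longrightarrow> f z' y - (norm (z' - x))^2 / (2 * \<epsilon>) < snd eb)"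
  proof
    fix z assume "z \<in> K"
    then have z: "z \<in> U" using KU by auto
    define bz where "bz = (f z y - (norm (z - x))^2 / (2 * \<epsilon>) + s) / 2"
    have bz: "f z y - (norm (z - x))^2 / (2 * \<epsilon>) < bz" "bz < s" using lt[OF z] unfolding bz_def by auto
    obtain d where "d > 0" "\<forall>z'. dist z' z < d \<longrightarrow> (z', y) \<in> U \<times> V \<longrightarrow> f z' y - (norm (z' - x))^2 / (2 * \<epsilon>) < bz"
      using ev_slice[OF loc[OF usc z y bz(1) e]] by blast
    then show "\<exists>eb. fst eb > 0 \<and> snd eb < s \<and>
      (\<forall>z'. dist z' z < fst eb \<longrightarrow> (z', y) \<in> U \<times> V \<longrightarrow> f z' y - (norm (z' - x))^2 / (2 * \<epsilon>) < snd eb)"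
      using bz by (intro exI[of _ "(d, bz)"]) auto
  qed
  then obtain EB where EB: "\<And>z. z \<in> K \<Longrightarrow> fst (EB z) > 0 \<and> snd (EB z) < s \<and>
      (\<forall>z'. dist z' z < fst (EB z) \<longrightarrow> (z', y) \<in> U \<times> V \<longrightarrow> f z' y - (norm (z' - x))^2 / (2 * \<epsilon>) < snd (EB z))"
    by metis
  have cov: "K \<subseteq> (\<Union>z\<in>K. ball z (fst (EB z)))"
  proof
    fix z assume "z \<in> K"
    then show "z \<in> (\<Union>z\<in>K. ball z (fst (EB z)))" using EB[of z] by (intro UN_I[of z]) auto
  qed
  obtain K' where K': "K' \<subseteq> K" "finite K'" "K \<subseteq> (\<Union>z\<in>K'. ball z (fst (EB z)))"
    using compactE_image[OF compact_cball[of x r] _ cov[unfolded K_def]] unfolding K_def by blast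
  have "x \<in> K" unfolding K_def using r by auto
  then have K'ne: "K' \<noteq> {}" using K' by auto
  define bs where "bs = Max ((\<lambda>z. snd (EB z)) ` K')"
  have bs: "bs < s" unfolding bs_def using K' K'ne EB by (subst Max_less_iff) auto
  have "s \<le> max bs (M - r^2 / (2 * \<epsilon>))"
    unfolding s_def
  proof (rule sc_le)
    show "U \<noteq> {}" using xU by auto
    fix z' assume z': "z' \<in> U"
    show "f z' y - (norm (z' - x))^2 / (2 * \<epsilon>) \<le> max bs (M - r^2 / (2 * \<epsilon>))"
    proof (cases "z' \<in> K")
      case True
      then obtain z where z: "z \<in> K'" "z' \<in> ball z (fst (EB z))" using K' by blast
      then have "dist z' z < fst (EB z)" by (simp add: dist_commute)
      then have "f z' y - (norm (z' - x))^2 / (2 * \<epsilon>) < snd (EB z)" using EB[of z] z K' z' y by auto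
      moreover have "snd (EB z) \<le> bs" unfolding bs_def using K' z by (intro Max_ge) auto
      ultimately show ?thesis by linarith
    next
      case False
      then have "r \<le> norm (z' - x)" unfolding K_def by (simp add: dist_norm norm_minus_commute)
      from far[OF hM e z' y _ this] r show ?thesis by linarith
    qed
  qed
  then show False using bs r(3) by linarith
qed

lemma sc_usc:
  fixes f :: "real^'n \<Rightarrow> real^'m \<Rightarrow> real"
  assumes hM: "\<forall>x\<in>U. \<forall>y\<in>V. \<bar>f x y\<bar> \<le> M" and e: "\<epsilon> > 0" and M0: "M > 0"
    and usc: "usc_on (U \<times> V) (\<lambda>(x,y). f x y)"
    and d: "\<delta> = 2 * sqrt (\<epsilon> * M)"
  shows "usc_on (shrink U \<delta> \<times> V) (\<lambda>(x,y). sup_conv \<epsilon> U f x y)"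
  unfolding usc_on_def
proof (intro ballI allI impI)
  fix w a assume w: "w \<in> shrink U \<delta> \<times> V" and wa: "(\<lambda>(x,y). sup_conv \<epsilon> U f x y) w < a"
  obtain x y where wxy: "w = (x, y)" by (cases w)
  have bx: "ball x \<delta> \<subseteq> U" and y: "y \<in> V" using w wxy unfolding shrink_def by auto
  have d0: "\<delta> > 0" using d e M0 by simp
  have xU: "x \<in> U" using bx d0 by auto
  define s where "s = sup_conv \<epsilon> U f x y"
  have sa: "s < a" using wa wxy s_def by simp
  define a' where "a' = (s + a) / 2"
  have a': "s < a'" "a' < a" using sa unfolding a'_def by auto
  have "- M \<le> f x y" using hM xU y by force
  moreover have "f x y \<le> s" unfolding s_def by (rule sc_self[OF e hM y xU])
  ultimately have aM: "a' > - M" using a' by linarith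
  obtain r where r: "r > 0" "r < \<delta>" "M - r^2 / (2 * \<epsilon>) < a'"
    using radius[OF M0 e aM] d by blast
  define r' where "r' = (r + \<delta>) / 2"
  define \<rho> where "\<rho> = (\<delta> - r) / 2"
  have rr: "r' < \<delta>" "\<rho> > 0" "r' - \<rho> = r" "r' \<ge> 0" using r unfolding r'_def \<rho>_def by (auto simp: field_simps)
  define K where "K = cball x r'"
  have KU: "K \<subseteq> U" using bx rr unfolding K_def by (auto simp: subset_iff)
  define S where "S = {q::((real^'n) \<times> (real^'m)) \<times> (real^'n). (snd q, snd (fst q)) \<in> U \<times> V \<longrightarrow>
      f (snd q) (snd (fst q)) - (norm (snd q - fst (fst q)))^2 / (2 * \<epsilon>) < a'}"
  have sub: "{(x, y)} \<times> K \<subseteq> interior S"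
  proof
    fix q assume "q \<in> {(x, y)} \<times> K"
    then obtain z where q: "q = ((x, y), z)" and z: "z \<in> K" by auto
    have zU: "z \<in> U" using z KU by auto
    have "f z y - (norm (z - x))^2 / (2 * \<epsilon>) < a'"
      using sc_ge[OF e hM y zU, of x] a' unfolding s_def by linarith
    from loc[OF usc zU y this e]
    have "eventually (\<lambda>q. q \<in> S) (nhds ((x, y), z))" unfolding S_def by simp
    then obtain T where "open T" "((x, y), z) \<in> T" "\<forall>q\<in>T. q \<in> S" unfolding eventually_nhds by blast
    then show "q \<in> interior S" using q by (intro interiorI[of T]) auto
  qed
  obtain X0 where X0: "(x, y) \<in> X0" "open X0" "X0 \<times> K \<subseteq> interior S"
    using Elementary_Topology.tube_lemma[OF compact_cball[of x r'] open_interior sub[unfolded K_def]] unfolding K_def by blast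
  have ev: "eventually (\<lambda>v. v \<in> X0 \<and> dist v (x, y) < \<rho>) (nhds (x, y))"
  proof (rule eventually_conj)
    show "eventually (\<lambda>v. v \<in> X0) (nhds (x, y))" using eventually_nhds_in_open[OF X0(2,1)] .
    show "eventually (\<lambda>v. dist v (x, y) < \<rho>) (nhds (x, y))"
      unfolding eventually_nhds_metric using rr(2) by blast
  qed
  have "eventually (\<lambda>v. (\<lambda>(x,y). sup_conv \<epsilon> U f x y) v < a) (at (x, y) within shrink U \<delta> \<times> V)"
    unfolding eventually_at_filter
  proof (rule eventually_mono[OF ev], intro impI)
    fix v assume v: "v \<in> X0 \<and> dist v (x, y) < \<rho>" and vW: "v \<in> shrink U \<delta> \<times> V"
    obtain x' y' where vxy: "v = (x', y')" by (cases v)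
    have y': "y' \<in> V" using vW vxy by auto
    have dx: "dist x' x < \<rho>" using v vxy dist_fst_le[of v "(x, y)"] by auto
    have "sup_conv \<epsilon> U f x' y' \<le> a'"
    proof (rule sc_le)
      show "U \<noteq> {}" using xU by auto
      fix z' assume z': "z' \<in> U"
      show "f z' y' - (norm (z' - x'))^2 / (2 * \<epsilon>) \<le> a'"
      proof (cases "z' \<in> K")
        case True
        then have "((x', y'), z') \<in> interior S" using X0(3) v vxy by auto
        then have "((x', y'), z') \<in> S" using interior_subset by blast
        then show ?thesis using z' y' unfolding S_def by auto
      next
        case False
        then have "r' < norm (z' - x)" unfolding K_def by (simp add: dist_norm norm_minus_commute)
        moreover have "norm (z' - x) \<le> norm (z' - x') + norm (x' - x)"
          using norm_triangle_ineq[of "z' - x'" "x' - x"] by simp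
        moreover have "norm (x' - x) < \<rho>" using dx by (simp add: dist_norm)
        ultimately have "r \<le> norm (z' - x')" using rr by linarith
        from far[OF hM e z' y' _ this] r show ?thesis by linarith
      qed
    qed
    then show "(\<lambda>(x,y). sup_conv \<epsilon> U f x y) v < a" using vxy a' by simp
  qed
  then show "eventually (\<lambda>v. (\<lambda>(x,y). sup_conv \<epsilon> U f x y) v < a) (at w within shrink U \<delta> \<times> V)"
    using wxy by simp
qed

lemma jet:
  fixes f :: "real^'n \<Rightarrow> real^'m \<Rightarrow> real"
  assumes hM: "\<forall>x\<in>U. \<forall>y\<in>V. \<bar>f x y\<bar> \<le> M" and e: "\<epsilon> > 0" and M0: "M > 0"
    and usc: "usc_on (U \<times> V) (\<lambda>(x,y). f x y)" and oU: "open U" and oV: "open V"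
    and bx: "ball x0 (2 * sqrt (\<epsilon> * M)) \<subseteq> U" and y0: "y0 \<in> V"
    and FPf: "FP_subharmonic F0 (U \<times> V) f" and neg: "negativity_property F0"
    and J: "upcj (sup_conv \<epsilon> U f) x0 y0 p1 p2 B C D"
  shows "(\<forall>\<Gamma>. i_pull \<Gamma> (sup_conv \<epsilon> U f x0 y0) p1 p2 B C D \<in> F0) \<and> psd D"
proof -
  obtain z0 where z0: "z0 \<in> U" and sz: "sup_conv \<epsilon> U f x0 y0 = f z0 y0 - (norm (z0 - x0))^2 / (2 * \<epsilon>)"
    using attain[OF hM e M0 usc bx y0] by blast
  define \<tau> where "\<tau> = z0 - x0"
  define c where "c = (norm \<tau>)^2 / (2 * \<epsilon>)"
  have sz': "sup_conv \<epsilon> U f x0 y0 = f z0 y0 - c" using sz unfolding c_def \<tau>_def .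
  have c0: "c \<ge> 0" unfolding c_def using e by simp
  let ?Q = "\<lambda>a b. p1 \<bullet> a + p2 \<bullet> b + (1/2) * (a \<bullet> (B *v a) + 2 * (a \<bullet> (C *v b)) + b \<bullet> (D *v b))"
  have Jsym: "sym_mat B" "sym_mat D" using J unfolding upcj_def by auto
  have Jev: "eventually (\<lambda>(x', y'). sup_conv \<epsilon> U f x' y' \<le> sup_conv \<epsilon> U f x0 y0 + ?Q (x' - x0) (y' - y0)) (nhds (x0, y0))"
    using J unfolding upcj_def by (simp add: algebra_simps)
  have tl: "((\<lambda>v. (fst v - \<tau>, snd v)) \<longlongrightarrow> (x0, y0)) (nhds (z0, y0))"
  proof -
    have "((\<lambda>v. (fst v - \<tau>, snd v)) \<longlongrightarrow> (fst (z0, y0) - \<tau>, snd (z0, y0))) (nhds (z0, y0))"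
      by (intro tendsto_intros filterlim_ident)
    then show ?thesis unfolding \<tau>_def by simp
  qed
  have ev1: "eventually (\<lambda>v. sup_conv \<epsilon> U f (fst v - \<tau>) (snd v) \<le> sup_conv \<epsilon> U f x0 y0 + ?Q (fst v - \<tau> - x0) (snd v - y0)) (nhds (z0, y0))"
    using ev_compose[OF Jev tl] by (simp add: case_prod_unfold)
  have ev2: "eventually (\<lambda>v. v \<in> U \<times> V) (nhds (z0, y0))"
    using eventually_nhds_in_open[of "U \<times> V" "(z0, y0)"] oU oV z0 y0 by (simp add: open_Times)
  have upf: "upcj f z0 y0 p1 p2 B C D"
    unfolding upcj_def
  proof (intro conjI Jsym)
    from ev1 ev2
    have "eventually (\<lambda>v. f (fst v) (snd v) \<le> f z0 y0 + ?Q (fst v - z0) (snd v - y0)) (nhds (z0, y0))"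
    proof eventually_elim
      case (elim v)
      obtain x' y' where v: "v = (x', y')" by (cases v)
      have x': "x' \<in> U" and y': "y' \<in> V" using elim v by auto
      have "f x' y' - c = f x' y' - (norm (x' - (x' - \<tau>)))^2 / (2 * \<epsilon>)" unfolding c_def by simp
      also have "\<dots> \<le> sup_conv \<epsilon> U f (x' - \<tau>) y'" by (rule sc_ge[OF e hM y' x'])
      also have "\<dots> \<le> sup_conv \<epsilon> U f x0 y0 + ?Q (x' - \<tau> - x0) (y' - y0)" using elim v by simp
      also have "x' - \<tau> - x0 = x' - z0" unfolding \<tau>_def by simp
      finally show ?case using v sz' by simp
    qed
    then show "eventually (\<lambda>(x', y'). f x' y' \<le> f z0 y0 + p1 \<bullet> (x' - z0) + p2 \<bullet> (y' - y0)
        + (1/2) * ((x' - z0) \<bullet> (B *v (x' - z0)) + 2 * ((x' - z0) \<bullet> (C *v (y' - y0)))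
                   + (y' - y0) \<bullet> (D *v (y' - y0)))) (nhds (z0, y0))"
      by (simp add: case_prod_unfold algebra_simps)
  qed
  have res: "(\<forall>\<Gamma>. i_pull \<Gamma> (f z0 y0) p1 p2 B C D \<in> F0) \<and> psd D"
    using FPf z0 y0 upf unfolding FP_subharmonic_def by blast
  have le: "sup_conv \<epsilon> U f x0 y0 \<le> f z0 y0" using sz' c0 by simp
  show ?thesis
  proof (intro conjI allI)
    show "psd D" using res by blast
    fix \<Gamma>
    have "i_pull \<Gamma> (f z0 y0) p1 p2 B C D \<in> F0" using res by blast
    then show "i_pull \<Gamma> (sup_conv \<epsilon> U f x0 y0) p1 p2 B C D \<in> F0"
      using neg le unfolding negativity_property_def i_pull_def by blast
  qed
qed

theorem lemma4p2:
  fixes U :: "(real^'n) set" and V :: "(real^'m) set"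
    and f :: "real^'n \<Rightarrow> real^'m \<Rightarrow> real"
  assumes "open U" and "open V"
    and usc: "usc_on (U \<times> V) (\<lambda>(x,y). f x y)"
    and bdd: "\<exists>M. \<forall>x\<in>U. \<forall>y\<in>V. \<bar>f x y\<bar> \<le> M"
  shows
    "(\<forall>\<epsilon>>0. (\<forall>x\<in>U. convex_fun_on V (\<lambda>y. f x y)) \<longrightarrow>
        convex_fun_on (U \<times> V) (\<lambda>(x,y). sup_conv \<epsilon> U f x y + (norm x)^2 / (2 * \<epsilon>)))
   \<and> (\<forall>\<epsilon> \<epsilon>'. 0 < \<epsilon>' \<and> \<epsilon>' \<le> \<epsilon> \<longrightarrow> (\<forall>x\<in>U. \<forall>y\<in>V.
        f x y \<le> sup_conv \<epsilon>' U f x y \<and> sup_conv \<epsilon>' U f x y \<le> sup_conv \<epsilon> U f x y))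
   \<and> (\<forall>\<epsilon>>0. let \<delta> = 2 * sqrt (\<epsilon> * sup_norm U V f) in 0 < \<delta> \<longrightarrow>
        (\<forall>x\<in>shrink U \<delta>. \<forall>y\<in>V.
           sup_conv \<epsilon> U f x y = (SUP \<tau>\<in>ball 0 \<delta>. f (x + \<tau>) y - (norm \<tau>)^2 / (2 * \<epsilon>))))
   \<and> (\<forall>x\<in>U. \<forall>y\<in>V. ((\<lambda>\<epsilon>. sup_conv \<epsilon> U f x y) \<longlongrightarrow> f x y) (at_right 0))
   \<and> (\<forall>F0 :: (real \<times> (real^'n) \<times> (real^'n^'n)) set.
        cc_primitive_subequation F0 \<and> negativity_property F0 \<and> FP_subharmonic F0 (U \<times> V) f \<longrightarrow>
        (\<forall>\<epsilon>>0. let \<delta> = 2 * sqrt (\<epsilon> * sup_norm U V f) in 0 < \<delta> \<longrightarrow>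
           FP_subharmonic F0 (shrink U \<delta> \<times> V) (sup_conv \<epsilon> U f)))"
proof -
  define M where "M = sup_norm U V f"
  obtain M1 where M1: "\<forall>x\<in>U. \<forall>y\<in>V. \<bar>f x y\<bar> \<le> M1" using bdd by blast
  have bddS: "bdd_above ((\<lambda>(x,y). \<bar>f x y\<bar>) ` (U \<times> V))"
    using M1 by (intro bdd_aboveI2[of _ _ M1]) auto
  have hM: "\<forall>x\<in>U. \<forall>y\<in>V. \<bar>f x y\<bar> \<le> M"
  proof (intro ballI)
    fix x y assume "x \<in> U" "y \<in> V"
    then have "(\<lambda>(x,y). \<bar>f x y\<bar>) (x, y) \<le> (SUP (x,y)\<in>U \<times> V. \<bar>f x y\<bar>)"
      by (intro cSUP_upper bddS) auto
    then show "\<bar>f x y\<bar> \<le> M" unfolding M_def sup_norm_def by simp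
  qed
  have Mpos: "M > 0" if "\<epsilon> > 0" "0 < 2 * sqrt (\<epsilon> * M)" for \<epsilon>
  proof -
    have "\<epsilon> * M > 0" using that by simp
    then show ?thesis using that(1) by (simp add: zero_less_mult_iff)
  qed
  have P1: "\<forall>\<epsilon>>0. (\<forall>x\<in>U. convex_fun_on V (\<lambda>y. f x y)) \<longrightarrow>
        convex_fun_on (U \<times> V) (\<lambda>(x,y). sup_conv \<epsilon> U f x y + (norm x)^2 / (2 * \<epsilon>))"
    using part1[OF hM] by blast
  have P2: "\<forall>\<epsilon> \<epsilon>'. 0 < \<epsilon>' \<and> \<epsilon>' \<le> \<epsilon> \<longrightarrow> (\<forall>x\<in>U. \<forall>y\<in>V.
        f x y \<le> sup_conv \<epsilon>' U f x y \<and> sup_conv \<epsilon>' U f x y \<le> sup_conv \<epsilon> U f x y)"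
    using part2[OF hM] by blast
  have P3: "\<forall>\<epsilon>>0. let \<delta> = 2 * sqrt (\<epsilon> * sup_norm U V f) in 0 < \<delta> \<longrightarrow>
        (\<forall>x\<in>shrink U \<delta>. \<forall>y\<in>V.
           sup_conv \<epsilon> U f x y = (SUP \<tau>\<in>ball 0 \<delta>. f (x + \<tau>) y - (norm \<tau>)^2 / (2 * \<epsilon>)))"
    unfolding Let_def M_def[symmetric] using part3[OF hM _ refl] by blast
  have P4: "\<forall>x\<in>U. \<forall>y\<in>V. ((\<lambda>\<epsilon>. sup_conv \<epsilon> U f x y) \<longlongrightarrow> f x y) (at_right 0)"
    using part4[OF hM usc] by blast
  have P5: "\<forall>F0 :: (real \<times> (real^'n) \<times> (real^'n^'n)) set.
        cc_primitive_subequation F0 \<and> negativity_property F0 \<and> FP_subharmonic F0 (U \<times> V) f \<longrightarrow>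
        (\<forall>\<epsilon>>0. let \<delta> = 2 * sqrt (\<epsilon> * sup_norm U V f) in 0 < \<delta> \<longrightarrow>
           FP_subharmonic F0 (shrink U \<delta> \<times> V) (sup_conv \<epsilon> U f))"
  proof (intro allI impI)
    fix F0 :: "(real \<times> (real^'n) \<times> (real^'n^'n)) set" and \<epsilon> :: real
    assume F: "cc_primitive_subequation F0 \<and> negativity_property F0 \<and> FP_subharmonic F0 (U \<times> V) f"
      and e: "\<epsilon> > 0"
    show "let \<delta> = 2 * sqrt (\<epsilon> * sup_norm U V f) in 0 < \<delta> \<longrightarrow>
           FP_subharmonic F0 (shrink U \<delta> \<times> V) (sup_conv \<epsilon> U f)"
      unfolding Let_def M_def[symmetric]
    proof
      assume d: "0 < 2 * sqrt (\<epsilon> * M)"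
      have M0: "M > 0" using Mpos[OF e d] .
      show "FP_subharmonic F0 (shrink U (2 * sqrt (\<epsilon> * M)) \<times> V) (sup_conv \<epsilon> U f)"
        unfolding FP_subharmonic_def
      proof (intro conjI)
        show "usc_on (shrink U (2 * sqrt (\<epsilon> * M)) \<times> V) (\<lambda>(x, y). sup_conv \<epsilon> U f x y)"
          by (rule sc_usc[OF hM e M0 usc refl])
        show "\<forall>(x, y)\<in>shrink U (2 * sqrt (\<epsilon> * M)) \<times> V. \<forall>p1 p2 B C D. upcj (sup_conv \<epsilon> U f) x y p1 p2 B C D \<longrightarrow>
           (\<forall>\<Gamma>. i_pull \<Gamma> (sup_conv \<epsilon> U f x y) p1 p2 B C D \<in> F0) \<and> psd D"
        proof (clarify)
          fix x y p1 p2 B C D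
          assume xy: "x \<in> shrink U (2 * sqrt (\<epsilon> * M))" "y \<in> V" and J: "upcj (sup_conv \<epsilon> U f) x y p1 p2 B C D"
          have bx: "ball x (2 * sqrt (\<epsilon> * M)) \<subseteq> U" using xy unfolding shrink_def by auto
          show "(\<forall>\<Gamma>. i_pull \<Gamma> (sup_conv \<epsilon> U f x y) p1 p2 B C D \<in> F0) \<and> psd D"
            using jet[OF hM e M0 usc assms(1,2) bx xy(2) _ _ J] F by blast
        qed
      qed
    qed
  qed
  show ?thesis using P1 P2 P3 P4 P5 by blast
qed

end
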